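(* Let $\mathbf{F}_{\Phi}$ be a fence over the Cantor space $X$, let $H_X:X\to X$ be a continuous surjection and let $T:\mathbf{F}_\Phi\to\mathbf{F}_\Phi$ be a continuous lifting of $H_X$ such that for every $x\in X$ the restriction of $T$ to the fiber $\{x\}\times\mathbf{F}_\Phi(x)$ is a homeomorphism (onto its image). Then the topological entropies satisfy $\mathrm{ent}(T)=\mathrm{ent}(H_X)$.
   Context: For $\Phi=(\varphi^L,\varphi^U)$ with $\varphi^L,\varphi^U:X\to[0,1]$, $\varphi^L$ lower semicontinuous, $\varphi^U$ upper semicontinuous, $\varphi^L\le\varphi^U$, the fence is $\mathbf{F}_\Phi=\{(x,t)\in X\times[0,1]:\varphi^L(x)\le t\le\varphi^U(x)\}$ and $\mathbf{F}_\Phi(x)=\{t:(x,t)\in\mathbf{F}_\Phi\}$. A map $T:\mathbf{F}_\Phi\to\mathbf{F}_\Phi$ is a lifting of $H_X:X\to X$ if $T(x,t)=(H_X(x),s)$ for some $s\in\mathbf{F}_\Phi(H_X(x))$, for every $(x,t)\in\mathbf{F}_\Phi$. *)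

theory Defs
  imports "HOL-Analysis.Analysis"
begin

definition cantor_space :: "(nat \<Rightarrow> bool) topology" where
  "cantor_space = product_topology (\<lambda>_. discrete_topology (UNIV :: bool set)) UNIV"

definition lsc_on :: "'a topology \<Rightarrow> ('a \<Rightarrow> real) \<Rightarrow> bool" where
  "lsc_on X f \<longleftrightarrow> (\<forall>a. openin X {x \<in> topspace X. f x > a})"

definition usc_on :: "'a topology \<Rightarrow> ('a \<Rightarrow> real) \<Rightarrow> bool" where
  "usc_on X f \<longleftrightarrow> (\<forall>a. openin X {x \<in> topspace X. f x < a})"

definition fence :: "'a topology \<Rightarrow> ('a \<Rightarrow> real) \<Rightarrow> ('a \<Rightarrow> real) \<Rightarrow> ('a \<times> real) set" where
  "fence X phiL phiU = {(x, t). x \<in> topspace X \<and> t \<in> {0..1} \<and> phiL x \<le> t \<and> t \<le> phiU x}"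

definition fence_fiber :: "'a topology \<Rightarrow> ('a \<Rightarrow> real) \<Rightarrow> ('a \<Rightarrow> real) \<Rightarrow> 'a \<Rightarrow> real set" where
  "fence_fiber X phiL phiU x = {t. (x, t) \<in> fence X phiL phiU}"

definition fence_topology :: "'a topology \<Rightarrow> ('a \<Rightarrow> real) \<Rightarrow> ('a \<Rightarrow> real) \<Rightarrow> ('a \<times> real) topology" where
  "fence_topology X phiL phiU = subtopology (prod_topology X euclideanreal) (fence X phiL phiU)"

definition is_fence_data :: "'a topology \<Rightarrow> ('a \<Rightarrow> real) \<Rightarrow> ('a \<Rightarrow> real) \<Rightarrow> bool" where
  "is_fence_data X phiL phiU \<longleftrightarrow>
     (\<forall>x \<in> topspace X. 0 \<le> phiL x \<and> phiL x \<le> phiU x \<and> phiU x \<le> 1) \<and>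
     lsc_on X phiL \<and> usc_on X phiU"

definition is_lifting :: "'a topology \<Rightarrow> ('a \<Rightarrow> real) \<Rightarrow> ('a \<Rightarrow> real) \<Rightarrow>
     ('a \<Rightarrow> 'a) \<Rightarrow> ('a \<times> real \<Rightarrow> 'a \<times> real) \<Rightarrow> bool" where
  "is_lifting X phiL phiU H T \<longleftrightarrow>
     (\<forall>(x, t) \<in> fence X phiL phiU.
        \<exists>s \<in> fence_fiber X phiL phiU (H x). T (x, t) = (H x, s))"

definition open_cover :: "'a topology \<Rightarrow> 'a set set \<Rightarrow> bool" where
  "open_cover Y U \<longleftrightarrow> (\<forall>A \<in> U. openin Y A) \<and> topspace Y \<subseteq> \<Union>U"

definition min_subcover_card :: "'a topology \<Rightarrow> 'a set set \<Rightarrow> nat" where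
  "min_subcover_card Y U = (LEAST n. \<exists>V \<subseteq> U. finite V \<and> card V = n \<and> topspace Y \<subseteq> \<Union>V)"

definition join_cover :: "'a topology \<Rightarrow> ('a \<Rightarrow> 'a) \<Rightarrow> 'a set set \<Rightarrow> nat \<Rightarrow> 'a set set" where
  "join_cover Y f U n =
     {{y \<in> topspace Y. \<forall>i<n. (f ^^ i) y \<in> A i} | A. \<forall>i<n. A i \<in> U}"

definition cover_entropy :: "'a topology \<Rightarrow> ('a \<Rightarrow> 'a) \<Rightarrow> 'a set set \<Rightarrow> ereal" where
  "cover_entropy Y f U =
     limsup (\<lambda>n. ereal (ln (real (min_subcover_card Y (join_cover Y f U (Suc n)))) / real (Suc n)))"

definition topological_entropy :: "'a topology \<Rightarrow> ('a \<Rightarrow> 'a) \<Rightarrow> ereal" where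
  "topological_entropy Y f = (SUP U \<in> {U. open_cover Y U}. cover_entropy Y f U)"

end

theory Submission
  imports Defs
begin

lemma cantor_props:
  assumes "X homeomorphic_space cantor_space"
  shows "compact_space X" "Hausdorff_space X" "topspace X \<noteq> {}"
proof -
  have ne: "topspace cantor_space \<noteq> {}"
    unfolding cantor_space_def by (auto simp: PiE_eq_empty_iff)
  have "compact_space cantor_space"
    unfolding cantor_space_def by (simp add: compact_space_product_topology compact_space_discrete_topology)
  then show "compact_space X" using assms homeomorphic_compact_space by blast
  have "Hausdorff_space cantor_space"
    unfolding cantor_space_def by (simp add: Hausdorff_space_product_topology)
  then show "Hausdorff_space X" using assms homeomorphic_Hausdorff_space by blast
  show "topspace X \<noteq> {}"
    using homeomorphic_empty_space[OF assms] ne by (metis null_topspace_iff_trivial)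
qed

lemma continuous_map_funpow:
  assumes "continuous_map Z Z f" shows "continuous_map Z Z (f ^^ i)"
proof (induction i)
  case (Suc i)
  show ?case using continuous_map_compose[OF Suc assms] by (simp add: comp_def)
qed simp

lemma openin_join_set:
  fixes n :: nat
  assumes "\<And>i. i < n \<Longrightarrow> continuous_map Z Z' (f i)" "\<And>i. i < n \<Longrightarrow> openin Z' (A i)"
  shows "openin Z {y \<in> topspace Z. \<forall>i<n. f i y \<in> A i}"
  using assms
proof (induction n)
  case 0
  then show ?case by simp
next
  case (Suc n)
  have eq: "{y \<in> topspace Z. \<forall>i<Suc n. f i y \<in> A i}
     = {y \<in> topspace Z. \<forall>i<n. f i y \<in> A i} \<inter> {y \<in> topspace Z. f n y \<in> A n}"
    using less_Suc_eq by auto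
  show ?case unfolding eq
    by (intro openin_Int Suc.IH openin_continuous_map_preimage[of _ Z']) (auto simp: Suc.prems)
qed

lemma funpow_topspace: "continuous_map Z Z f \<Longrightarrow> y \<in> topspace Z \<Longrightarrow> (f ^^ i) y \<in> topspace Z"
  using continuous_map_image_subset_topspace[OF continuous_map_funpow[of Z f i]] by blast

lemma join_open_cover:
  assumes "open_cover Z U" "continuous_map Z Z f"
  shows "open_cover Z (join_cover Z f U n)"
  unfolding open_cover_def
proof (intro conjI ballI subsetI)
  fix E assume "E \<in> join_cover Z f U n"
  then obtain A where E: "E = {y \<in> topspace Z. \<forall>i<n. (f ^^ i) y \<in> A i}" and A: "\<forall>i<n. A i \<in> U"
    unfolding join_cover_def by blast
  show "openin Z E" unfolding E
  proof (rule openin_join_set[where f="\<lambda>i. f ^^ i" and Z'=Z])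
    fix i assume "i < n"
    show "continuous_map Z Z (f ^^ i)" by (rule continuous_map_funpow[OF assms(2)])
    show "openin Z (A i)" using A \<open>i < n\<close> assms(1) unfolding open_cover_def by blast
  qed
next
  fix y assume y: "y \<in> topspace Z"
  define A where "A i = (SOME B. B \<in> U \<and> (f ^^ i) y \<in> B)" for i
  have ex: "\<exists>B. B \<in> U \<and> (f ^^ i) y \<in> B" for i
    using funpow_topspace[OF assms(2) y, of i] assms(1) unfolding open_cover_def by blast
  have Ai: "A i \<in> U \<and> (f ^^ i) y \<in> A i" for i
    unfolding A_def by (rule someI_ex[OF ex])
  have "{y \<in> topspace Z. \<forall>i<n. (f ^^ i) y \<in> A i} \<in> join_cover Z f U n"
    unfolding join_cover_def by (intro CollectI exI[of _ A] conjI refl) (use Ai in blast)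
  moreover have "y \<in> {y \<in> topspace Z. \<forall>i<n. (f ^^ i) y \<in> A i}"
    using y Ai by blast
  ultimately show "y \<in> \<Union> (join_cover Z f U n)" by blast
qed

lemma min_sub_exists:
  assumes "compact_space Z" "open_cover Z V"
  shows "\<exists>W\<subseteq>V. finite W \<and> card W = min_subcover_card Z V \<and> topspace Z \<subseteq> \<Union>W"
proof -
  have "compactin Z (topspace Z)" using assms(1) by (simp add: compact_space_def)
  then have "\<forall>U. (\<forall>U\<in>U. openin Z U) \<and> topspace Z \<subseteq> \<Union>U \<longrightarrow> (\<exists>F. finite F \<and> F \<subseteq> U \<and> topspace Z \<subseteq> \<Union>F)"
    unfolding compactin_def by (elim conjE)
  then obtain W0 where W0: "finite W0" "W0 \<subseteq> V" "topspace Z \<subseteq> \<Union>W0"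
    using assms(2) unfolding open_cover_def by meson
  define P where "P n \<longleftrightarrow> (\<exists>W\<subseteq>V. finite W \<and> card W = n \<and> topspace Z \<subseteq> \<Union>W)" for n
  have "P (card W0)" unfolding P_def using W0 by blast
  then have "P (LEAST n. P n)" by (rule LeastI)
  moreover have "min_subcover_card Z V = (LEAST n. P n)"
    unfolding min_subcover_card_def P_def by simp
  ultimately show ?thesis unfolding P_def by simp
qed

lemma min_sub_le:
  assumes "W \<subseteq> V" "finite W" "topspace Z \<subseteq> \<Union>W"
  shows "min_subcover_card Z V \<le> card W"
proof -
  have "\<exists>W'\<subseteq>V. finite W' \<and> card W' = card W \<and> topspace Z \<subseteq> \<Union>W'" using assms by blast
  then show ?thesis unfolding min_subcover_card_def by (rule Least_le)
qed

lemma min_sub_pos: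
  assumes "compact_space Z" "open_cover Z V" "topspace Z \<noteq> {}"
  shows "1 \<le> min_subcover_card Z V"
proof -
  obtain W where "W \<subseteq> V" "finite W" "card W = min_subcover_card Z V" "topspace Z \<subseteq> \<Union>W"
    using min_sub_exists[OF assms(1,2)] by blast
  with assms(3) show ?thesis by (cases "W = {}") (auto simp: card_gt_0_iff Suc_le_eq)
qed


locale fs =
  fixes X :: "'a topology" and phiL phiU :: "'a \<Rightarrow> real" and H :: "'a \<Rightarrow> 'a"
    and T :: "'a \<times> real \<Rightarrow> 'a \<times> real"
  assumes compX: "compact_space X" and hausX: "Hausdorff_space X" and neX: "topspace X \<noteq> {}"
    and fd: "is_fence_data X phiL phiU"
    and contH: "continuous_map X X H"
    and surjH: "H ` topspace X = topspace X"
    and Tmap: "T \<in> fence X phiL phiU \<rightarrow> fence X phiL phiU"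
    and contT: "continuous_map (fence_topology X phiL phiU) (fence_topology X phiL phiU) T"
    and lift: "is_lifting X phiL phiU H T"
    and emb: "\<And>x. x \<in> topspace X \<Longrightarrow>
           embedding_map (subtopology (fence_topology X phiL phiU) ({x} \<times> fence_fiber X phiL phiU x))
                         (fence_topology X phiL phiU) T"
begin

abbreviation "Y \<equiv> fence_topology X phiL phiU"
abbreviation "Fe \<equiv> fence X phiL phiU"

lemma Fe_sub: "Fe \<subseteq> topspace X \<times> {0..1}"
  by (auto simp: fence_def)

lemma topY: "topspace Y = Fe"
  using Fe_sub by (auto simp: fence_topology_def)

lemma mem_Fe: "(x, t) \<in> Fe \<longleftrightarrow> x \<in> topspace X \<and> phiL x \<le> t \<and> t \<le> phiU x"
  using fd by (auto simp: fence_def is_fence_data_def)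

lemma phi_bounds: "x \<in> topspace X \<Longrightarrow> 0 \<le> phiL x \<and> phiL x \<le> phiU x \<and> phiU x \<le> 1"
  using fd by (auto simp: is_fence_data_def)

lemma T_step: "y \<in> Fe \<Longrightarrow> T y \<in> Fe \<and> fst (T y) = H (fst y)"
  using lift Tmap unfolding is_lifting_def fence_fiber_def by (cases y) fastforce

lemma T_iter: "y \<in> Fe \<Longrightarrow> (T ^^ i) y \<in> Fe \<and> fst ((T ^^ i) y) = (H ^^ i) (fst y)"
  by (induction i) (auto simp: T_step)

lemma H_iter: "x \<in> topspace X \<Longrightarrow> (H ^^ i) x \<in> topspace X"
  by (induction i) (use contH in \<open>auto simp: continuous_map_def\<close>)

lemma contTi: "continuous_map Y Y (T ^^ i)"
  by (rule continuous_map_funpow[OF contT])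

lemma contHi: "continuous_map X X (H ^^ i)"
  by (rule continuous_map_funpow[OF contH])

lemma cont_fst: "continuous_map Y X fst"
  unfolding fence_topology_def
  by (rule continuous_map_from_subtopology) (rule continuous_map_fst)

lemma cont_snd: "continuous_map Y euclideanreal snd"
  unfolding fence_topology_def
  by (rule continuous_map_from_subtopology) (rule continuous_map_snd)

lemma Fe_closed: "closedin (prod_topology X euclideanreal) Fe"
proof -
  have L: "openin (prod_topology X euclideanreal) {p \<in> topspace X \<times> UNIV. snd p < phiL (fst p)}"
  proof -
    have "{p \<in> topspace X \<times> UNIV. snd p < phiL (fst p)} = (\<Union>a. {x \<in> topspace X. phiL x > a} \<times> {t. t < a})"
    proof (rule set_eqI, rule iffI)
      fix p assume "p \<in> {p \<in> topspace X \<times> UNIV. snd p < phiL (fst p)}"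
      then show "p \<in> (\<Union>a. {x \<in> topspace X. phiL x > a} \<times> {t. t < a})"
        by (cases p) (auto intro!: exI[of _ "(snd p + phiL (fst p)) / 2"])
    qed auto
    moreover have "openin (prod_topology X euclideanreal) ({x \<in> topspace X. phiL x > a} \<times> {t. t < a})" for a
      using fd by (intro openin_prod_Times_iff[THEN iffD2]) (auto simp: is_fence_data_def lsc_on_def open_lessThan[unfolded lessThan_def])
    ultimately show ?thesis by auto
  qed
  have U: "openin (prod_topology X euclideanreal) {p \<in> topspace X \<times> UNIV. phiU (fst p) < snd p}"
  proof -
    have "{p \<in> topspace X \<times> UNIV. phiU (fst p) < snd p} = (\<Union>a. {x \<in> topspace X. phiU x < a} \<times> {t. a < t})"
    proof (rule set_eqI, rule iffI)
      fix p assume "p \<in> {p \<in> topspace X \<times> UNIV. phiU (fst p) < snd p}"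
      then show "p \<in> (\<Union>a. {x \<in> topspace X. phiU x < a} \<times> {t. a < t})"
        by (cases p) (auto intro!: exI[of _ "(snd p + phiU (fst p)) / 2"])
    qed auto
    moreover have "openin (prod_topology X euclideanreal) ({x \<in> topspace X. phiU x < a} \<times> {t. a < t})" for a
      using fd by (intro openin_prod_Times_iff[THEN iffD2]) (auto simp: is_fence_data_def usc_on_def open_greaterThan[unfolded greaterThan_def])
    ultimately show ?thesis by auto
  qed
  have "Fe = topspace (prod_topology X euclideanreal) - ({p \<in> topspace X \<times> UNIV. snd p < phiL (fst p)} \<union> {p \<in> topspace X \<times> UNIV. phiU (fst p) < snd p})"
    using fd by (auto simp: fence_def is_fence_data_def)
  moreover have "closedin (prod_topology X euclideanreal) (topspace (prod_topology X euclideanreal) - ({p \<in> topspace X \<times> UNIV. snd p < phiL (fst p)} \<union> {p \<in> topspace X \<times> UNIV. phiU (fst p) < snd p}))"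
    by (intro closedin_diff closedin_topspace openin_Un L U)
  ultimately show ?thesis by simp
qed

lemma compY: "compact_space Y"
proof -
  have "compactin (prod_topology X euclideanreal) (topspace X \<times> {0..1})"
    using compX by (simp add: compactin_Times compact_space_def)
  then have "compactin (prod_topology X euclideanreal) Fe"
    using Fe_closed Fe_sub by (metis closed_compactin)
  then show ?thesis unfolding fence_topology_def by (simp add: compact_space_subtopology)
qed

lemma inj_fiber:
  assumes "x \<in> topspace X" shows "inj_on T ({x} \<times> fence_fiber X phiL phiU x)"
proof -
  have "topspace (subtopology Y ({x} \<times> fence_fiber X phiL phiU x)) = {x} \<times> fence_fiber X phiL phiU x"
    by (auto simp: topY fence_fiber_def)
  then show ?thesis using emb[OF assms] unfolding embedding_map_def
    by (metis homeomorphic_imp_injective_map)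
qed


lemma openY_preimage: "openin X A \<Longrightarrow> openin Y {y \<in> Fe. fst y \<in> A}"
  using openin_continuous_map_preimage[OF cont_fst, of A] by (simp add: topY)

end

context fs begin
lemma lower_cover:
  assumes U: "open_cover X U"
  shows "cover_entropy X H U \<le> topological_entropy Y T"
proof -
  define UY where "UY = (\<lambda>A. {y \<in> Fe. fst y \<in> A}) ` U"
  have UYc: "open_cover Y UY"
    unfolding open_cover_def UY_def
  proof (intro conjI ballI subsetI)
    fix B assume "B \<in> (\<lambda>A. {y \<in> Fe. fst y \<in> A}) ` U"
    then obtain A where "A \<in> U" "B = {y \<in> Fe. fst y \<in> A}" by blast
    then show "openin Y B"
      using U openY_preimage unfolding open_cover_def by blast
  next
    fix y assume "y \<in> topspace Y"
    then have "y \<in> Fe" "fst y \<in> topspace X" using topY Fe_sub by auto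
    then obtain A where "A \<in> U" "fst y \<in> A" using U unfolding open_cover_def by blast
    then show "y \<in> \<Union> ((\<lambda>A. {y \<in> Fe. fst y \<in> A}) ` U)" using \<open>y \<in> Fe\<close> by blast
  qed
  have NN: "min_subcover_card X (join_cover X H U n) \<le> min_subcover_card Y (join_cover Y T UY n)" for n
  proof -
    obtain WY where WY: "WY \<subseteq> join_cover Y T UY n" "finite WY"
      "card WY = min_subcover_card Y (join_cover Y T UY n)" "topspace Y \<subseteq> \<Union>WY"
      using min_sub_exists[OF compY join_open_cover[OF UYc contT]] by meson
    have ex: "\<exists>E. E \<in> join_cover X H U n \<and> fst ` Z \<subseteq> E" if "Z \<in> WY" for Z
    proof -
      have "Z \<in> join_cover Y T UY n" using WY(1) \<open>Z \<in> WY\<close> by blast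
      then have "\<exists>A. Z = {y \<in> topspace Y. \<forall>i<n. (T ^^ i) y \<in> A i} \<and> (\<forall>i<n. A i \<in> UY)"
        unfolding join_cover_def by (simp only: mem_Collect_eq)
      then obtain A where A: "Z = {y \<in> topspace Y. \<forall>i<n. (T ^^ i) y \<in> A i}" "\<forall>i<n. A i \<in> UY"
        by blast
      define B where "B i = (SOME B. B \<in> U \<and> A i = {y \<in> Fe. fst y \<in> B})" for i
      have B: "B i \<in> U \<and> A i = {y \<in> Fe. fst y \<in> B i}" if "i < n" for i
      proof -
        have "A i \<in> (\<lambda>A. {y \<in> Fe. fst y \<in> A}) ` U" using A(2) that unfolding UY_def by blast
        then have "\<exists>B. B \<in> U \<and> A i = {y \<in> Fe. fst y \<in> B}" by blast
        then show ?thesis unfolding B_def by (rule someI_ex)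
      qed
      have "{x \<in> topspace X. \<forall>i<n. (H ^^ i) x \<in> B i} \<in> join_cover X H U n"
        unfolding join_cover_def by (intro CollectI exI[of _ B] conjI refl) (use B in blast)
      moreover have "fst ` Z \<subseteq> {x \<in> topspace X. \<forall>i<n. (H ^^ i) x \<in> B i}"
      proof
        fix x assume "x \<in> fst ` Z"
        then obtain y where y: "y \<in> Z" "x = fst y" by blast
        then have yF: "y \<in> Fe" using A topY by auto
        have "(H ^^ i) x \<in> B i" if "i < n" for i
        proof -
          have "(T ^^ i) y \<in> A i" using A(1) y(1) that by blast
          then have "fst ((T ^^ i) y) \<in> B i" using B[OF that] by blast
          then show ?thesis using T_iter[OF yF] y(2) by simp
        qed
        then show "x \<in> {x \<in> topspace X. \<forall>i<n. (H ^^ i) x \<in> B i}"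
          using yF Fe_sub y by auto
      qed
      ultimately show ?thesis by blast
    qed
    define phi where "phi Z = (SOME E. E \<in> join_cover X H U n \<and> fst ` Z \<subseteq> E)" for Z :: "('a \<times> real) set"
    have phi: "phi Z \<in> join_cover X H U n \<and> fst ` Z \<subseteq> phi Z" if "Z \<in> WY" for Z
      unfolding phi_def using someI_ex[OF ex[OF that]] .
    have cov: "topspace X \<subseteq> \<Union> (phi ` WY)"
    proof
      fix x assume x: "x \<in> topspace X"
      then have "(x, phiL x) \<in> Fe" using mem_Fe phi_bounds by auto
      then obtain Z where "Z \<in> WY" "(x, phiL x) \<in> Z" using WY(4) topY by blast
      then have "x \<in> fst ` Z" by (intro image_eqI[of _ _ "(x, phiL x)"]) auto
      then have "x \<in> phi Z" using phi[OF \<open>Z \<in> WY\<close>] by blast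
      then show "x \<in> \<Union> (phi ` WY)" using \<open>Z \<in> WY\<close> by blast
    qed
    have "min_subcover_card X (join_cover X H U n) \<le> card (phi ` WY)"
    proof (rule min_sub_le)
      show "phi ` WY \<subseteq> join_cover X H U n" using phi by blast
      show "finite (phi ` WY)" using WY(2) by simp
      show "topspace X \<subseteq> \<Union> (phi ` WY)" by (rule cov)
    qed
    also have "\<dots> \<le> card WY" using WY(2) card_image_le by blast
    finally show ?thesis using WY(3) by simp
  qed
  have pos: "1 \<le> min_subcover_card X (join_cover X H U n)" for n
    by (rule min_sub_pos[OF compX join_open_cover[OF U contH] neX])
  have "cover_entropy X H U \<le> cover_entropy Y T UY"
    unfolding cover_entropy_def
  proof (rule Limsup_mono, rule always_eventually, rule allI)
    fix n
    have "ln (real (min_subcover_card X (join_cover X H U (Suc n))))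
       \<le> ln (real (min_subcover_card Y (join_cover Y T UY (Suc n))))"
      using NN[of "Suc n"] pos[of "Suc n"] by (subst ln_le_cancel_iff) auto
    then show "ereal (ln (real (min_subcover_card X (join_cover X H U (Suc n)))) / real (Suc n))
       \<le> ereal (ln (real (min_subcover_card Y (join_cover Y T UY (Suc n)))) / real (Suc n))"
      by (simp add: divide_right_mono)
  qed
  also have "\<dots> \<le> topological_entropy Y T"
    unfolding topological_entropy_def by (rule SUP_upper) (use UYc in auto)
  finally show ?thesis .
qed

lemma lower: "topological_entropy X H \<le> topological_entropy Y T"
  unfolding topological_entropy_def[of X] by (rule SUP_least) (use lower_cover in auto)

end

lemma cont_inj_incr:
  fixes f :: "real \<Rightarrow> real"
  assumes cont: "continuous_on {a..b} f" and inj: "inj_on f {a..b}" and ab: "f a < f b" "a < b"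
  shows "\<forall>s t. a \<le> s \<and> s < t \<and> t \<le> b \<longrightarrow> f s < f t"
proof (intro allI impI)
  fix s t assume st: "a \<le> s \<and> s < t \<and> t \<le> b"
  have key: "f a < f x" if "a < x" "x < b" for x
    using continuous_inj_imp_mono[OF that cont inj] ab by auto
  have fat: "f a < f t"
  proof (cases "t = b")
    case True then show ?thesis using ab by simp
  next
    case False then show ?thesis using key st by auto
  qed
  show "f s < f t"
  proof (cases "s = a")
    case True then show ?thesis using fat by simp
  next
    case False
    then have "a < s" using st by auto
    have c2: "continuous_on {a..t} f" by (rule continuous_on_subset[OF cont]) (use st in auto)
    have i2: "inj_on f {a..t}" by (rule inj_on_subset[OF inj]) (use st in auto)
    show ?thesis using continuous_inj_imp_mono[OF \<open>a < s\<close> _ c2 i2] st fat by auto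
  qed
qed

lemma cont_inj_mono:
  fixes f :: "real \<Rightarrow> real"
  assumes cont: "continuous_on {a..b} f" and inj: "inj_on f {a..b}"
  shows "(\<forall>s\<in>{a..b}. \<forall>t\<in>{a..b}. s \<le> t \<longrightarrow> f s \<le> f t) \<or> (\<forall>s\<in>{a..b}. \<forall>t\<in>{a..b}. s \<le> t \<longrightarrow> f t \<le> f s)"
proof (cases "a < b")
  case False
  then have "\<forall>s\<in>{a..b}. \<forall>t\<in>{a..b}. s \<le> t \<longrightarrow> s = t" by auto
  then show ?thesis by auto
next
  case True
  have "f a \<noteq> f b" using inj True unfolding inj_on_def by (metis atLeastAtMost_iff less_eq_real_def order_refl less_irrefl)
  then consider "f a < f b" | "f b < f a" by linarith
  then show ?thesis
  proof cases
    case 1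
    from cont_inj_incr[OF cont inj 1 True] show ?thesis
      by (metis atLeastAtMost_iff order.order_iff_strict order_less_imp_le)
  next
    case 2
    have c: "continuous_on {a..b} (\<lambda>x. - f x)" using cont by (intro continuous_intros)
    have i: "inj_on (\<lambda>x. - f x) {a..b}" using inj by (auto simp: inj_on_def)
    from cont_inj_incr[OF c i _ True] 2 have "\<forall>s t. a \<le> s \<and> s < t \<and> t \<le> b \<longrightarrow> f t < f s" by auto
    then show ?thesis by (metis atLeastAtMost_iff order.order_iff_strict order_less_imp_le)
  qed
qed

context fs begin

lemma box_local:
  assumes W: "open_cover Y W" and p: "p \<in> Fe"
  shows "\<exists>G A r. openin X G \<and> fst p \<in> G \<and> A \<in> W \<and> r > 0 \<and>
           (\<forall>q\<in>Fe. fst q \<in> G \<and> dist (snd q) (snd p) < r \<longrightarrow> q \<in> A)"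
proof -
  obtain A where A: "A \<in> W" "p \<in> A" using W p topY unfolding open_cover_def by blast
  then have "openin Y A" using W unfolding open_cover_def by blast
  then obtain Op where Op: "openin (prod_topology X euclideanreal) Op" "A = Op \<inter> Fe"
    unfolding fence_topology_def openin_subtopology by blast
  obtain x t where pxt: "p = (x, t)" by (cases p)
  have xt: "(x, t) \<in> Op" using A Op pxt by blast
  obtain G J where GJ: "openin X G" "openin euclideanreal J" "x \<in> G" "t \<in> J" "G \<times> J \<subseteq> Op"
    using Op(1)[unfolded openin_prod_topology_alt, rule_format, OF xt] by blast
  have "open J" using GJ(2) by simp
  then obtain r where r: "r > 0" "ball t r \<subseteq> J" using GJ(4) open_contains_ball[THEN iffD1, OF \<open>open J\<close>] by blast
  have "\<forall>q\<in>Fe. fst q \<in> G \<and> dist (snd q) (snd p) < r \<longrightarrow> q \<in> A"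
  proof (intro ballI impI)
    fix q assume q: "q \<in> Fe" "fst q \<in> G \<and> dist (snd q) (snd p) < r"
    then have "snd q \<in> ball t r" using pxt by (simp add: dist_commute)
    then have "snd q \<in> J" using r by blast
    then have "q \<in> G \<times> J" using q by (cases q) simp
    then show "q \<in> A" using GJ(5) Op(2) q(1) by blast
  qed
  then show ?thesis using GJ(1,3) A(1) r(1) pxt by auto
qed

lemma box_lemma:
  assumes W: "open_cover Y W"
  shows "\<exists>\<delta>>0. \<forall>p\<in>Fe. \<exists>G A. openin X G \<and> fst p \<in> G \<and> A \<in> W \<and>
           (\<forall>q\<in>Fe. fst q \<in> G \<and> dist (snd q) (snd p) < \<delta> \<longrightarrow> q \<in> A)"
proof -
  have "\<forall>p\<in>Fe. \<exists>z. openin X (fst z) \<and> fst p \<in> fst z \<and> fst (snd z) \<in> W \<and> snd (snd z) > 0 \<and>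
           (\<forall>q\<in>Fe. fst q \<in> fst z \<and> dist (snd q) (snd p) < snd (snd z) \<longrightarrow> q \<in> fst (snd z))"
  proof
    fix p assume "p \<in> Fe"
    from box_local[OF W this] obtain G A r where "openin X G \<and> fst p \<in> G \<and> A \<in> W \<and> r > 0 \<and>
           (\<forall>q\<in>Fe. fst q \<in> G \<and> dist (snd q) (snd p) < r \<longrightarrow> q \<in> A)" by blast
    then show "\<exists>z. openin X (fst z) \<and> fst p \<in> fst z \<and> fst (snd z) \<in> W \<and> snd (snd z) > 0 \<and>
           (\<forall>q\<in>Fe. fst q \<in> fst z \<and> dist (snd q) (snd p) < snd (snd z) \<longrightarrow> q \<in> fst (snd z))"
      by (intro exI[of _ "(G, A, r)"]) simp
  qed
  then obtain z where z: "\<forall>p\<in>Fe. openin X (fst (z p)) \<and> fst p \<in> fst (z p) \<and> fst (snd (z p)) \<in> W \<and> snd (snd (z p)) > 0 \<and>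
           (\<forall>q\<in>Fe. fst q \<in> fst (z p) \<and> dist (snd q) (snd p) < snd (snd (z p)) \<longrightarrow> q \<in> fst (snd (z p)))"
    by (rule bchoice[THEN exE]) blast
  define Gf where "Gf p = fst (z p)" for p
  define Af where "Af p = fst (snd (z p))" for p
  define rf where "rf p = snd (snd (z p))" for p
  have zz: "openin X (Gf p)" "fst p \<in> Gf p" "Af p \<in> W" "rf p > 0"
      "\<And>q. q \<in> Fe \<Longrightarrow> fst q \<in> Gf p \<Longrightarrow> dist (snd q) (snd p) < rf p \<Longrightarrow> q \<in> Af p"
    if "p \<in> Fe" for p
    using z that unfolding Gf_def Af_def rf_def by blast+
  define HB where "HB p = {q \<in> topspace Y. fst q \<in> Gf p \<and> snd q \<in> ball (snd p) (rf p / 2)}" for p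
  have HBo: "openin Y (HB p)" if "p \<in> Fe" for p
  proof -
    have "HB p = {q \<in> topspace Y. fst q \<in> Gf p} \<inter> {q \<in> topspace Y. snd q \<in> ball (snd p) (rf p / 2)}"
      unfolding HB_def by blast
    moreover have "openin Y {q \<in> topspace Y. fst q \<in> Gf p}"
      by (rule openin_continuous_map_preimage[OF cont_fst zz(1)[OF that]])
    moreover have "openin Y {q \<in> topspace Y. snd q \<in> ball (snd p) (rf p / 2)}"
      by (rule openin_continuous_map_preimage[OF cont_snd]) simp
    ultimately show ?thesis by (simp add: openin_Int)
  qed
  have HBc: "p \<in> HB p" if "p \<in> Fe" for p
    unfolding HB_def using zz[OF that] that topY by simp
  have "compactin Y (topspace Y)" using compY by (simp add: compact_space_def)
  then have "\<forall>U. (\<forall>U\<in>U. openin Y U) \<and> topspace Y \<subseteq> \<Union>U \<longrightarrow> (\<exists>F. finite F \<and> F \<subseteq> U \<and> topspace Y \<subseteq> \<Union>F)"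
    unfolding compactin_def by (elim conjE)
  moreover have "(\<forall>U\<in>HB ` Fe. openin Y U) \<and> topspace Y \<subseteq> \<Union>(HB ` Fe)"
    using HBo HBc topY by blast
  ultimately obtain F where F: "finite F" "F \<subseteq> HB ` Fe" "topspace Y \<subseteq> \<Union>F"
    by meson
  obtain P where P: "P \<subseteq> Fe" "finite P" "F = HB ` P"
    using finite_subset_image[OF F(1,2)] by blast
  define \<delta> where "\<delta> = Min (insert 1 ((\<lambda>p. rf p / 2) ` P))"
  have dpos: "\<delta> > 0" unfolding \<delta>_def using P zz(4) by (subst Min_gr_iff) auto
  have dle: "\<delta> \<le> rf p / 2" if "p \<in> P" for p unfolding \<delta>_def using P that by (intro Min_le) auto
  have "\<forall>p\<in>Fe. \<exists>G A. openin X G \<and> fst p \<in> G \<and> A \<in> W \<and>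
           (\<forall>q\<in>Fe. fst q \<in> G \<and> dist (snd q) (snd p) < \<delta> \<longrightarrow> q \<in> A)"
  proof
    fix p assume p: "p \<in> Fe"
    then obtain p' where p': "p' \<in> P" "p \<in> HB p'" using F(3) P(3) topY by blast
    have p'F: "p' \<in> Fe" using p' P by blast
    have pp: "fst p \<in> Gf p'" "dist (snd p) (snd p') < rf p' / 2"
      using p' unfolding HB_def by (auto simp: dist_commute)
    have "\<forall>q\<in>Fe. fst q \<in> Gf p' \<and> dist (snd q) (snd p) < \<delta> \<longrightarrow> q \<in> Af p'"
    proof (intro ballI impI)
      fix q assume q: "q \<in> Fe" "fst q \<in> Gf p' \<and> dist (snd q) (snd p) < \<delta>"
      have "dist (snd q) (snd p') \<le> dist (snd q) (snd p) + dist (snd p) (snd p')"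
        by (rule dist_triangle)
      also have "\<dots> < rf p'" using q pp dle[OF p'(1)] by linarith
      finally show "q \<in> Af p'" using zz(5)[OF p'F q(1)] q by blast
    qed
    then show "\<exists>G A. openin X G \<and> fst p \<in> G \<and> A \<in> W \<and>
           (\<forall>q\<in>Fe. fst q \<in> G \<and> dist (snd q) (snd p) < \<delta> \<longrightarrow> q \<in> A)"
      using zz(1,3)[OF p'F] pp(1) by blast
  qed
  then show ?thesis using dpos by blast
qed

end

context fs begin

lemma fiber_eq: "{x} \<times> fence_fiber X phiL phiU x = {p \<in> Fe. fst p = x}"
  unfolding fence_fiber_def by auto

lemma Ti_inj: "x \<in> topspace X \<Longrightarrow> inj_on (T ^^ i) {p \<in> Fe. fst p = x}"
proof (induction i)
  case 0
  then show ?case by simp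
next
  case (Suc i)
  have sub: "(T ^^ i) ` {p \<in> Fe. fst p = x} \<subseteq> {p \<in> Fe. fst p = (H ^^ i) x}"
    using T_iter by auto
  have "inj_on T {p \<in> Fe. fst p = (H ^^ i) x}"
    using inj_fiber[OF H_iter[OF Suc.prems]] fiber_eq by simp
  then have "inj_on T ((T ^^ i) ` {p \<in> Fe. fst p = x})" using sub inj_on_subset by blast
  then have "inj_on (T \<circ> (T ^^ i)) {p \<in> Fe. fst p = x}"
    by (rule comp_inj_on[OF Suc.IH[OF Suc.prems]])
  then show ?case by (simp add: comp_def)
qed

lemma Ti_pair: "(x, t) \<in> Fe \<Longrightarrow> (T ^^ i) (x, t) = ((H ^^ i) x, snd ((T ^^ i) (x, t)))"
  using T_iter[of "(x, t)" i] by (simp add: prod_eq_iff)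

lemma g_range: "(x, t) \<in> Fe \<Longrightarrow> 0 \<le> snd ((T ^^ i) (x, t)) \<and> snd ((T ^^ i) (x, t)) \<le> 1"
  using T_iter[of "(x, t)" i] Fe_sub by (auto simp: mem_Times_iff)

lemma g_cont:
  assumes x: "x \<in> topspace X"
  shows "continuous_on {phiL x..phiU x} (\<lambda>t. snd ((T ^^ i) (x, t)))"
proof -
  have c1: "continuous_map (top_of_set {phiL x..phiU x}) (prod_topology X euclideanreal) (\<lambda>t. (x, t))"
    by (intro continuous_map_pairedI) (use x in \<open>auto simp: continuous_map_from_subtopology\<close>)
  have "(\<lambda>t. (x, t)) \<in> topspace (top_of_set {phiL x..phiU x}) \<rightarrow> Fe"
    using x mem_Fe by auto
  then have c2: "continuous_map (top_of_set {phiL x..phiU x}) Y (\<lambda>t. (x, t))"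
    unfolding fence_topology_def by (rule continuous_map_into_subtopology[OF c1])
  have "continuous_map (top_of_set {phiL x..phiU x}) euclideanreal (snd \<circ> (T ^^ i) \<circ> (\<lambda>t. (x, t)))"
    by (intro continuous_map_compose[OF c2] continuous_map_compose[OF contTi cont_snd])
  then show ?thesis by (simp add: o_def)
qed

lemma g_inj:
  assumes x: "x \<in> topspace X"
  shows "inj_on (\<lambda>t. snd ((T ^^ i) (x, t))) {phiL x..phiU x}"
proof (rule inj_onI)
  fix s t assume s: "s \<in> {phiL x..phiU x}" and t: "t \<in> {phiL x..phiU x}"
    and eq: "snd ((T ^^ i) (x, s)) = snd ((T ^^ i) (x, t))"
  have sF: "(x, s) \<in> Fe" and tF: "(x, t) \<in> Fe" using s t x mem_Fe by auto
  have "(T ^^ i) (x, s) = (T ^^ i) (x, t)" using Ti_pair[OF sF, of i] Ti_pair[OF tF, of i] eq by simp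
  then have "(x, s) = (x, t)" using Ti_inj[OF x, of i] sF tF unfolding inj_on_def by auto
  then show "s = t" by simp
qed

end

lemma floor_eq_close:
  fixes u v :: real
  assumes "\<lfloor>u\<rfloor> = \<lfloor>v\<rfloor>" shows "\<bar>u - v\<bar> < 1"
proof -
  have "of_int \<lfloor>u\<rfloor> \<le> u" "u < of_int \<lfloor>u\<rfloor> + 1" "of_int \<lfloor>v\<rfloor> \<le> v" "v < of_int \<lfloor>v\<rfloor> + 1"
    by linarith+
  then show ?thesis using assms by linarith
qed

context fs begin

lemma code_count:
  fixes m :: nat and \<delta> :: real
  assumes x0: "x0 \<in> topspace X" and dpos: "\<delta> > 0"
  defines "g \<equiv> \<lambda>i t. snd ((T ^^ i) (x0, t))"
  defines "code \<equiv> \<lambda>t. (\<lambda>i. if i < m then \<lfloor>2 * g i t / \<delta>\<rfloor> else 0)"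
  shows "finite (code ` {phiL x0..phiU x0}) \<and> card (code ` {phiL x0..phiU x0}) \<le> m * nat \<lfloor>2 / \<delta>\<rfloor> + 1"
proof -
  define I where "I = {phiL x0..phiU x0}"
  define K where "K = \<lfloor>2 / \<delta>\<rfloor>"
  have IF: "(x0, t) \<in> Fe" if "t \<in> I" for t using that x0 mem_Fe unfolding I_def by auto
  have grange: "0 \<le> g i t \<and> g i t \<le> 1" if "t \<in> I" for i t
    unfolding g_def using g_range[OF IF[OF that]] .
  have frange: "0 \<le> \<lfloor>2 * g i t / \<delta>\<rfloor> \<and> \<lfloor>2 * g i t / \<delta>\<rfloor> \<le> K" if "t \<in> I" for i t
  proof -
    have "0 \<le> 2 * g i t / \<delta>" using grange[OF that] dpos by simp
    moreover have "2 * g i t / \<delta> \<le> 2 / \<delta>" using grange[OF that] dpos by (simp add: divide_right_mono)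
    ultimately show ?thesis unfolding K_def by (simp add: floor_mono)
  qed
  define dir where "dir i \<longleftrightarrow> (\<forall>s\<in>I. \<forall>t\<in>I. s \<le> t \<longrightarrow> g i s \<le> g i t)" for i
  have dir_not: "\<forall>s\<in>I. \<forall>t\<in>I. s \<le> t \<longrightarrow> g i t \<le> g i s" if "\<not> dir i" for i
  proof -
    have "continuous_on I (g i)" unfolding I_def g_def by (rule g_cont[OF x0])
    moreover have "inj_on (g i) I" unfolding I_def g_def by (rule g_inj[OF x0])
    ultimately show ?thesis using cont_inj_mono[of "phiL x0" "phiU x0" "g i"] that
      unfolding dir_def I_def by blast
  qed
  define d where "d i t = (if dir i then \<lfloor>2 * g i t / \<delta>\<rfloor> else K - \<lfloor>2 * g i t / \<delta>\<rfloor>)" for i t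
  have dmono: "d i s \<le> d i t" if "s \<in> I" "t \<in> I" "s \<le> t" for i s t
  proof (cases "dir i")
    case True
    then have "g i s \<le> g i t" using that unfolding dir_def by blast
    then have "2 * g i s / \<delta> \<le> 2 * g i t / \<delta>" using dpos by (simp add: divide_right_mono)
    then show ?thesis using True unfolding d_def by (simp add: floor_mono)
  next
    case False
    then have "g i t \<le> g i s" using that dir_not by blast
    then have "2 * g i t / \<delta> \<le> 2 * g i s / \<delta>" using dpos by (simp add: divide_right_mono)
    then have "\<lfloor>2 * g i t / \<delta>\<rfloor> \<le> \<lfloor>2 * g i s / \<delta>\<rfloor>" by (simp add: floor_mono)
    then show ?thesis using False unfolding d_def by simp
  qed
  have drange: "0 \<le> d i t \<and> d i t \<le> K" if "t \<in> I" for i t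
    using frange[OF that, of i] unfolding d_def by auto
  have dcode: "\<lfloor>2 * g i s / \<delta>\<rfloor> = \<lfloor>2 * g i t / \<delta>\<rfloor>" if "d i s = d i t" for i s t
    using that unfolding d_def by (auto split: if_splits)
  define \<sigma> where "\<sigma> t = (\<Sum>i<m. d i t)" for t
  have sig_code: "code s = code t" if "s \<in> I" "t \<in> I" "s \<le> t" "\<sigma> s = \<sigma> t" for s t
  proof -
    have "d i s = d i t" if "i < m" for i
    proof (rule ccontr)
      assume "d i s \<noteq> d i t"
      then have "d i s < d i t" using dmono[OF \<open>s \<in> I\<close> \<open>t \<in> I\<close> \<open>s \<le> t\<close>, of i] by simp
      have "\<sigma> s < \<sigma> t" unfolding \<sigma>_def
      proof (rule sum_strict_mono_ex1)
        show "finite {..<m}" by simp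
        show "\<forall>x\<in>{..<m}. d x s \<le> d x t" using dmono[OF \<open>s \<in> I\<close> \<open>t \<in> I\<close> \<open>s \<le> t\<close>] by blast
        show "\<exists>a\<in>{..<m}. d a s < d a t" using \<open>d i s < d i t\<close> that by blast
      qed
      then show False using \<open>\<sigma> s = \<sigma> t\<close> by simp
    qed
    have "code s i = code t i" for i
    proof (cases "i < m")
      case True
      then have "\<lfloor>2 * g i s / \<delta>\<rfloor> = \<lfloor>2 * g i t / \<delta>\<rfloor>" using dcode \<open>\<And>i. i < m \<Longrightarrow> d i s = d i t\<close> by blast
      then show ?thesis unfolding code_def using True by simp
    next
      case False
      then show ?thesis unfolding code_def by simp
    qed
    then show ?thesis by (rule ext)
  qed
  have sig_code': "code s = code t" if "s \<in> I" "t \<in> I" "\<sigma> s = \<sigma> t" for s t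
  proof (cases "s \<le> t")
    case True then show ?thesis using sig_code that by blast
  next
    case False then show ?thesis using sig_code[of t s] that by simp
  qed
  have sig_range: "\<sigma> ` I \<subseteq> {0..int m * K}"
  proof
    fix v assume "v \<in> \<sigma> ` I"
    then obtain t where t: "t \<in> I" "v = \<sigma> t" by blast
    have "0 \<le> \<sigma> t" unfolding \<sigma>_def by (intro sum_nonneg) (use drange[OF t(1)] in auto)
    moreover have "\<sigma> t \<le> (\<Sum>i<m. K)" unfolding \<sigma>_def by (intro sum_mono) (use drange[OF t(1)] in auto)
    ultimately show "v \<in> {0..int m * K}" using t by simp
  qed
  define rep where "rep v = (SOME t. t \<in> I \<and> \<sigma> t = v)" for v
  have "code ` I \<subseteq> (\<lambda>v. code (rep v)) ` (\<sigma> ` I)"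
  proof
    fix c assume "c \<in> code ` I"
    then obtain t where t: "t \<in> I" "c = code t" by blast
    have "\<exists>t'. t' \<in> I \<and> \<sigma> t' = \<sigma> t" using t by blast
    then have r: "rep (\<sigma> t) \<in> I \<and> \<sigma> (rep (\<sigma> t)) = \<sigma> t" unfolding rep_def by (rule someI_ex)
    then have "code (rep (\<sigma> t)) = code t" using sig_code' t(1) by blast
    moreover have "\<sigma> t \<in> \<sigma> ` I" using t(1) by (rule imageI)
    ultimately show "c \<in> (\<lambda>v. code (rep v)) ` (\<sigma> ` I)" using t(2) by (intro image_eqI[where x="\<sigma> t"]) simp_all
  qed
  moreover have fin: "finite ((\<lambda>v. code (rep v)) ` (\<sigma> ` I))"
    by (rule finite_imageI, rule finite_subset[OF sig_range]) simp
  ultimately have "finite (code ` I)" "card (code ` I) \<le> card ((\<lambda>v. code (rep v)) ` (\<sigma> ` I))"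
    by (auto intro: finite_subset card_mono)
  moreover have "card ((\<lambda>v. code (rep v)) ` (\<sigma> ` I)) \<le> card (\<sigma> ` I)"
    by (rule card_image_le) (rule finite_subset[OF sig_range], simp)
  moreover have "card (\<sigma> ` I) \<le> card {0..int m * K}"
    by (rule card_mono) (use sig_range in auto)
  moreover have "card {0..int m * K} = m * nat K + 1"
  proof -
    have "K \<ge> 0" unfolding K_def using dpos by simp
    then show ?thesis by (simp add: nat_mult_distrib nat_add_distrib)
  qed
  ultimately show ?thesis unfolding I_def K_def by linarith
qed

end

context fs begin

lemma fiber_cover:
  fixes m :: nat and \<delta> :: real
  assumes W: "open_cover Y W" and dpos: "\<delta> > 0"
    and box: "\<forall>p\<in>Fe. \<exists>G A. openin X G \<and> fst p \<in> G \<and> A \<in> W \<and>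
           (\<forall>q\<in>Fe. fst q \<in> G \<and> dist (snd q) (snd p) < \<delta> \<longrightarrow> q \<in> A)"
    and x0: "x0 \<in> topspace X"
  shows "\<exists>V S. openin X V \<and> x0 \<in> V \<and> finite S \<and> card S \<le> m * nat \<lfloor>2 / \<delta>\<rfloor> + 1 \<and>
     (\<forall>A\<in>S. \<forall>i<m. A i \<in> W) \<and> (\<forall>y\<in>Fe. fst y \<in> V \<longrightarrow> (\<exists>A\<in>S. \<forall>i<m. (T ^^ i) y \<in> A i))"
proof -
  define I where "I = {phiL x0..phiU x0}"
  define g where "g = (\<lambda>i t. snd ((T ^^ i) (x0, t)))"
  define code where "code = (\<lambda>t. (\<lambda>i. if i < m then \<lfloor>2 * g i t / \<delta>\<rfloor> else 0))"
  have cc: "finite (code ` I) \<and> card (code ` I) \<le> m * nat \<lfloor>2 / \<delta>\<rfloor> + 1"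
    using code_count[OF x0 dpos, of m] unfolding code_def g_def I_def by simp
  have IF: "(x0, t) \<in> Fe" if "t \<in> I" for t using that x0 mem_Fe unfolding I_def by simp
  define rep where "rep c = (SOME t. t \<in> I \<and> code t = c)" for c
  have rep: "rep c \<in> I \<and> code (rep c) = c" if "c \<in> code ` I" for c
  proof -
    have "\<exists>t. t \<in> I \<and> code t = c" using that by blast
    then show ?thesis unfolding rep_def by (rule someI_ex)
  qed
  define PB where "PB c i z \<longleftrightarrow> openin X (fst z) \<and> fst ((T ^^ i) (x0, rep c)) \<in> fst z \<and> snd z \<in> W \<and>
     (\<forall>q\<in>Fe. fst q \<in> fst z \<and> dist (snd q) (snd ((T ^^ i) (x0, rep c))) < \<delta> \<longrightarrow> q \<in> snd z)" for c i z
  have PBex: "\<exists>z. PB c i z" if "c \<in> code ` I" for c i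
  proof -
    have "(T ^^ i) (x0, rep c) \<in> Fe" using T_iter IF rep[OF that] by blast
    from box[rule_format, OF this] obtain G A where "openin X G \<and> fst ((T ^^ i) (x0, rep c)) \<in> G \<and> A \<in> W \<and>
           (\<forall>q\<in>Fe. fst q \<in> G \<and> dist (snd q) (snd ((T ^^ i) (x0, rep c))) < \<delta> \<longrightarrow> q \<in> A)"
      by blast
    then have "PB c i (G, A)" unfolding PB_def by simp
    then show ?thesis by blast
  qed
  define Af where "Af c i = snd (SOME z. PB c i z)" for c i
  define Gf where "Gf c i = fst (SOME z. PB c i z)" for c i
  have PBs: "PB c i (Gf c i, Af c i)" if "c \<in> code ` I" for c i
    unfolding Gf_def Af_def using someI_ex[OF PBex[OF that]] by simp
  have AfW: "Af c i \<in> W" if "c \<in> code ` I" for c i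
    using PBs[OF that, of i] unfolding PB_def by simp
  define Ob where "Ob c = {y \<in> topspace Y. \<forall>i<m. (T ^^ i) y \<in> Af c i}" for c
  have Obo: "openin Y (Ob c)" if "c \<in> code ` I" for c
    unfolding Ob_def
  proof (rule openin_join_set[where f="\<lambda>i. T ^^ i" and Z'=Y])
    fix i assume "i < m"
    show "continuous_map Y Y (T ^^ i)" by (rule contTi)
    show "openin Y (Af c i)" using AfW[OF that] W unfolding open_cover_def by blast
  qed
  have fibcov: "(x0, t) \<in> Ob (code t)" if "t \<in> I" for t
  proof -
    define c where "c = code t"
    have c: "c \<in> code ` I" using that unfolding c_def by blast
    have tF: "(x0, t) \<in> Fe" by (rule IF[OF that])
    have rF: "(x0, rep c) \<in> Fe" using IF rep[OF c] by blast
    have "(T ^^ i) (x0, t) \<in> Af c i" if "i < m" for i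
    proof -
      have "code (rep c) i = code t i" using rep[OF c] unfolding c_def by simp
      then have fl: "\<lfloor>2 * g i (rep c) / \<delta>\<rfloor> = \<lfloor>2 * g i t / \<delta>\<rfloor>" using that unfolding code_def by simp
      have "\<bar>2 * g i (rep c) / \<delta> - 2 * g i t / \<delta>\<bar> < 1" by (rule floor_eq_close[OF fl])
      moreover have "2 * g i (rep c) / \<delta> - 2 * g i t / \<delta> = 2 * (g i (rep c) - g i t) / \<delta>"
        by (simp add: diff_divide_distrib right_diff_distrib)
      ultimately have "\<bar>2 * (g i (rep c) - g i t)\<bar> / \<delta> < 1" using dpos by (simp add: abs_divide)
      then have "\<bar>2 * (g i (rep c) - g i t)\<bar> < \<delta>" using dpos by (simp add: divide_less_eq)
      then have dd: "dist (snd ((T ^^ i) (x0, t))) (snd ((T ^^ i) (x0, rep c))) < \<delta>"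
        unfolding g_def dist_real_def by (simp add: abs_minus_commute)
      have ff: "fst ((T ^^ i) (x0, t)) = fst ((T ^^ i) (x0, rep c))"
        using T_iter[OF tF, of i] T_iter[OF rF, of i] by simp
      have TF: "(T ^^ i) (x0, t) \<in> Fe" using T_iter[OF tF] by blast
      have P: "PB c i (Gf c i, Af c i)" by (rule PBs[OF c])
      then have "fst ((T ^^ i) (x0, rep c)) \<in> Gf c i" unfolding PB_def by simp
      then have "fst ((T ^^ i) (x0, t)) \<in> Gf c i" using ff by simp
      with P TF dd show ?thesis unfolding PB_def by simp
    qed
    then show ?thesis unfolding Ob_def c_def using tF topY by simp
  qed
  define Obu where "Obu = \<Union>(Ob ` code ` I)"
  have Obuo: "openin Y Obu" unfolding Obu_def by (intro openin_Union) (use Obo in blast)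
  define Kc where "Kc = topspace Y - Obu"
  have "closedin Y Kc" unfolding Kc_def using Obuo by (simp add: closedin_diff)
  then have "compactin Y Kc" by (rule closedin_compact_space[OF compY])
  then have "compactin X (fst ` Kc)" by (rule image_compactin[OF _ cont_fst])
  then have clK: "closedin X (fst ` Kc)" by (rule compactin_imp_closedin[OF hausX])
  define V where "V = topspace X - fst ` Kc"
  have Vo: "openin X V" unfolding V_def using clK by (simp add: openin_diff)
  have x0K: "x0 \<notin> fst ` Kc"
  proof
    assume "x0 \<in> fst ` Kc"
    then obtain y where y: "y \<in> Kc" "x0 = fst y" by blast
    then have yF: "y \<in> Fe" unfolding Kc_def using topY by blast
    obtain t where yt: "y = (x0, t)" using y(2) by (cases y) simp
    then have "t \<in> I" using yF mem_Fe unfolding I_def by simp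
    then have "y \<in> Ob (code t)" using fibcov yt by simp
    then have "y \<in> Obu" unfolding Obu_def using \<open>t \<in> I\<close> by blast
    then show False using y(1) unfolding Kc_def by blast
  qed
  have x0V: "x0 \<in> V" unfolding V_def using x0 x0K by blast
  define S where "S = Af ` code ` I"
  have finS: "finite S" unfolding S_def using cc by blast
  have cardS: "card S \<le> m * nat \<lfloor>2 / \<delta>\<rfloor> + 1"
    unfolding S_def using cc card_image_le[of "code ` I" Af] by linarith
  have SW: "\<forall>A\<in>S. \<forall>i<m. A i \<in> W" unfolding S_def using AfW by blast
  have Scov: "\<forall>y\<in>Fe. fst y \<in> V \<longrightarrow> (\<exists>A\<in>S. \<forall>i<m. (T ^^ i) y \<in> A i)"
  proof (intro ballI impI)
    fix y assume y: "y \<in> Fe" "fst y \<in> V"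
    then have "y \<notin> Kc" unfolding V_def by blast
    then have "y \<in> Obu" unfolding Kc_def using y topY by blast
    then obtain c where c: "c \<in> code ` I" "y \<in> Ob c" unfolding Obu_def by blast
    then have "\<forall>i<m. (T ^^ i) y \<in> Af c i" unfolding Ob_def by blast
    moreover have "Af c \<in> S" unfolding S_def using c(1) by blast
    ultimately show "\<exists>A\<in>S. \<forall>i<m. (T ^^ i) y \<in> A i" by blast
  qed
  show ?thesis using Vo x0V finS cardS SW Scov by blast
qed

end

context fs begin

lemma count_lemma:
  fixes m n C :: nat and W :: "('a \<times> real) set set" and Um :: "'a set set"
  assumes W: "open_cover Y W" and m: "m > 0" and C: "C \<ge> 1" and Um: "open_cover X Um"
    and SS: "\<forall>V\<in>Um. \<exists>S. finite S \<and> card S \<le> C \<and> (\<forall>A\<in>S. \<forall>i<m. A i \<in> W) \<and>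
              (\<forall>y\<in>Fe. fst y \<in> V \<longrightarrow> (\<exists>A\<in>S. \<forall>i<m. (T ^^ i) y \<in> A i))"
  shows "min_subcover_card Y (join_cover Y T W n) \<le> min_subcover_card X (join_cover X H Um n) * C ^ (n div m + 1)"
proof -
  define q where "q = n div m + 1"
  obtain Ecov where Ecov: "Ecov \<subseteq> join_cover X H Um n" "finite Ecov"
      "card Ecov = min_subcover_card X (join_cover X H Um n)" "topspace X \<subseteq> \<Union>Ecov"
    using min_sub_exists[OF compX join_open_cover[OF Um contH]] by meson
  define PS where "PS V S \<longleftrightarrow> finite S \<and> card S \<le> C \<and> (\<forall>A\<in>S. \<forall>i<m. A i \<in> W) \<and>
              (\<forall>y\<in>Fe. fst y \<in> V \<longrightarrow> (\<exists>A\<in>S. \<forall>i<m. (T ^^ i) y \<in> A i))" for V S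
  define Sf where "Sf V = (SOME S. PS V S)" for V
  have Sf: "PS V (Sf V)" if "V \<in> Um" for V
  proof -
    have "\<exists>S. PS V S" using SS that unfolding PS_def by blast
    then show ?thesis unfolding Sf_def by (rule someI_ex)
  qed
  define PB where "PB E B \<longleftrightarrow> E = {x \<in> topspace X. \<forall>i<n. (H ^^ i) x \<in> B i} \<and> (\<forall>i<n. B i \<in> Um)" for E B
  define Bf where "Bf E = (SOME B. PB E B)" for E
  have Bf: "PB E (Bf E)" if "E \<in> Ecov" for E
  proof -
    have "E \<in> join_cover X H Um n" using Ecov(1) that by blast
    then have "\<exists>B. PB E B" unfolding join_cover_def PB_def by (simp only: mem_Collect_eq)
    then show ?thesis unfolding Bf_def by (rule someI_ex)
  qed
  define BS where "BS E j = (if j * m < n then Sf (Bf E (j * m)) else {\<lambda>_. topspace Y})" for E j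
  have BSfin: "finite (BS E j) \<and> card (BS E j) \<le> C" if "E \<in> Ecov" for E j
  proof (cases "j * m < n")
    case True
    then have "Bf E (j * m) \<in> Um" using Bf[OF that] unfolding PB_def by blast
    then show ?thesis using Sf unfolding BS_def PS_def using True by simp
  next
    case False then show ?thesis unfolding BS_def using C by simp
  qed
  define Z where "Z \<kappa> = {y \<in> topspace Y. \<forall>i<n. (T ^^ i) y \<in> \<kappa> (i div m) (i mod m)}" for \<kappa> :: "nat \<Rightarrow> nat \<Rightarrow> ('a \<times> real) set"
  define Fam where "Fam = (\<Union>E\<in>Ecov. Z ` (PiE {..<q} (BS E)))"
  have sub: "Fam \<subseteq> join_cover Y T W n"
  proof
    fix F assume "F \<in> Fam"
    then obtain E \<kappa> where E: "E \<in> Ecov" and k: "\<kappa> \<in> PiE {..<q} (BS E)" and F: "F = Z \<kappa>"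
      unfolding Fam_def by blast
    have kW: "\<kappa> (i div m) (i mod m) \<in> W" if "i < n" for i
    proof -
      have jq: "i div m < q" unfolding q_def using that by (simp add: div_le_mono less_Suc_eq_le)
      have jm: "i div m * m < n" using that by (meson div_times_less_eq_dividend le_less_trans)
      have "\<kappa> (i div m) \<in> BS E (i div m)" using k jq by (simp add: PiE_iff)
      then have kS: "\<kappa> (i div m) \<in> Sf (Bf E (i div m * m))" unfolding BS_def using jm by simp
      have "Bf E (i div m * m) \<in> Um" using Bf[OF E] jm unfolding PB_def by blast
      then show ?thesis using Sf kS m unfolding PS_def by simp
    qed
    show "F \<in> join_cover Y T W n"
      unfolding join_cover_def F Z_def
      by (intro CollectI exI[of _ "\<lambda>i. \<kappa> (i div m) (i mod m)"] conjI refl) (use kW in blast)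
  qed
  have cardE: "finite (Z ` (PiE {..<q} (BS E))) \<and> card (Z ` (PiE {..<q} (BS E))) \<le> C ^ q" if "E \<in> Ecov" for E
  proof -
    have fin: "finite (PiE {..<q} (BS E))" using BSfin[OF that] by (intro finite_PiE) auto
    have "card (Z ` (PiE {..<q} (BS E))) \<le> card (PiE {..<q} (BS E))" by (rule card_image_le[OF fin])
    also have "\<dots> = (\<Prod>j<q. card (BS E j))" by (simp add: card_PiE)
    also have "\<dots> \<le> (\<Prod>j<q. C)" by (rule prod_mono) (use BSfin[OF that] in auto)
    also have "\<dots> = C ^ q" by simp
    finally show ?thesis using fin by simp
  qed
  have finFam: "finite Fam" unfolding Fam_def using Ecov(2) cardE by blast
  have "card Fam \<le> (\<Sum>E\<in>Ecov. card (Z ` (PiE {..<q} (BS E))))"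
    unfolding Fam_def by (rule card_UN_le[OF Ecov(2)])
  also have "\<dots> \<le> (\<Sum>E\<in>Ecov. C ^ q)" by (rule sum_mono) (use cardE in blast)
  also have "\<dots> = card Ecov * C ^ q" by simp
  finally have cardFam: "card Fam \<le> card Ecov * C ^ q" .
  have cov: "topspace Y \<subseteq> \<Union>Fam"
  proof
    fix y assume "y \<in> topspace Y"
    then have yF: "y \<in> Fe" using topY by simp
    then have "fst y \<in> topspace X" using Fe_sub by auto
    then obtain E where E: "E \<in> Ecov" "fst y \<in> E" using Ecov(4) by blast
    have Hin: "(H ^^ i) (fst y) \<in> Bf E i" if "i < n" for i
      using Bf[OF E(1)] E(2) that unfolding PB_def by blast
    define Q where "Q j A \<longleftrightarrow> A \<in> BS E j \<and> (\<forall>r<m. j * m + r < n \<longrightarrow> (T ^^ r) ((T ^^ (j * m)) y) \<in> A r)" for j A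
    have Qex: "\<exists>A. Q j A" for j
    proof (cases "j * m < n")
      case True
      let ?V = "Bf E (j * m)"
      have V: "?V \<in> Um" using Bf[OF E(1)] True unfolding PB_def by blast
      have TF: "(T ^^ (j * m)) y \<in> Fe" and Tfst: "fst ((T ^^ (j * m)) y) = (H ^^ (j * m)) (fst y)"
        using T_iter[OF yF] by auto
      have "fst ((T ^^ (j * m)) y) \<in> ?V" using Hin[OF True] Tfst by simp
      then obtain A where "A \<in> Sf ?V" "\<forall>r<m. (T ^^ r) ((T ^^ (j * m)) y) \<in> A r"
        using Sf[OF V] TF unfolding PS_def by blast
      then have "Q j A" unfolding Q_def BS_def using True by simp
      then show ?thesis by blast
    next
      case False
      then have "Q j (\<lambda>_. topspace Y)" unfolding Q_def BS_def by simp
      then show ?thesis by blast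
    qed
    define \<kappa> where "\<kappa> = restrict (\<lambda>j. SOME A. Q j A) {..<q}"
    have kQ: "Q j (\<kappa> j)" if "j < q" for j
      unfolding \<kappa>_def using that someI_ex[OF Qex[of j]] by simp
    have kP: "\<kappa> \<in> PiE {..<q} (BS E)"
      unfolding \<kappa>_def restrict_PiE_iff using kQ[unfolded Q_def] by (simp add: \<kappa>_def)
    have "y \<in> Z \<kappa>"
      unfolding Z_def
    proof (intro CollectI conjI allI impI)
      show "y \<in> topspace Y" using \<open>y \<in> topspace Y\<close> .
      fix i assume i: "i < n"
      define j where "j = i div m"
      define r where "r = i mod m"
      have ij: "i = j * m + r" unfolding j_def r_def by simp
      have jq: "j < q" unfolding q_def j_def using i by (simp add: div_le_mono less_Suc_eq_le)
      have rm: "r < m" unfolding r_def using m by simp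
      have "(T ^^ r) ((T ^^ (j * m)) y) \<in> \<kappa> j r" using kQ[OF jq] rm i ij unfolding Q_def by simp
      moreover have "(T ^^ i) y = (T ^^ r) ((T ^^ (j * m)) y)"
        unfolding ij by (simp add: funpow_add add.commute[of "j * m" r])
      ultimately show "(T ^^ i) y \<in> \<kappa> (i div m) (i mod m)" unfolding j_def r_def by simp
    qed
    then show "y \<in> \<Union>Fam" unfolding Fam_def using E(1) kP by blast
  qed
  have "min_subcover_card Y (join_cover Y T W n) \<le> card Fam"
    by (rule min_sub_le[OF sub finFam cov])
  also have "\<dots> \<le> card Ecov * C ^ q" by (rule cardFam)
  finally show ?thesis using Ecov(3) unfolding q_def by simp
qed

end

lemma ln_lin_small:
  fixes K :: nat and \<epsilon> :: real
  assumes e: "\<epsilon> > 0"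
  shows "\<exists>m>0. ln (real (m * K + 1)) / real m < \<epsilon>"
proof -
  obtain N :: nat where N: "4 * (real K + 1) / \<epsilon>\<^sup>2 < real N" using reals_Archimedean2 by blast
  define m where "m = Suc N"
  have m0: "real m > 0" unfolding m_def by simp
  have mN: "4 * (real K + 1) / \<epsilon>\<^sup>2 < real m" using N unfolding m_def by simp
  define x where "x = real (m * K + 1)"
  have x1: "x \<ge> 1" unfolding x_def by simp
  have "ln x = 2 * ln (sqrt x)" using x1 by (simp add: ln_sqrt)
  also have "\<dots> \<le> 2 * (sqrt x - 1)" using ln_le_minus_one[of "sqrt x"] x1 by simp
  also have "\<dots> < 2 * sqrt x" by simp
  finally have l1: "ln x < 2 * sqrt x" .
  have "x \<le> real m * (real K + 1)" unfolding x_def using m0 by (simp add: algebra_simps)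
  then have "sqrt x \<le> sqrt (real m * (real K + 1))" by simp
  then have "sqrt x \<le> sqrt (real m) * sqrt (real K + 1)" by (simp only: real_sqrt_mult)
  with l1 have l2: "ln x < 2 * sqrt (real m) * sqrt (real K + 1)" by simp
  have "4 * (real K + 1) < \<epsilon>\<^sup>2 * real m" using mN e by (simp add: field_simps)
  then have "sqrt (4 * (real K + 1)) < sqrt (\<epsilon>\<^sup>2 * real m)" by (simp only: real_sqrt_less_iff)
  moreover have "sqrt (4 * (real K + 1)) = 2 * sqrt (real K + 1)"
  proof -
    have "sqrt 4 = (2::real)" by (rule real_sqrt_unique) auto
    then show ?thesis by (simp only: real_sqrt_mult)
  qed
  moreover have "sqrt (\<epsilon>\<^sup>2 * real m) = \<epsilon> * sqrt (real m)"
    using e by (simp only: real_sqrt_mult real_sqrt_abs abs_of_pos)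
  ultimately have l3: "2 * sqrt (real K + 1) < \<epsilon> * sqrt (real m)" by simp
  have "sqrt (real m) * (2 * sqrt (real K + 1)) < sqrt (real m) * (\<epsilon> * sqrt (real m))"
    by (rule mult_strict_left_mono[OF l3]) (use m0 in simp)
  moreover have "2 * sqrt (real m) * sqrt (real K + 1) = sqrt (real m) * (2 * sqrt (real K + 1))" by simp
  ultimately have "ln x < sqrt (real m) * (\<epsilon> * sqrt (real m))" using l2 by linarith
  also have "\<dots> = \<epsilon> * real m" using m0 by simp
  finally have "ln x / real m < \<epsilon>" using m0 by (simp add: divide_less_eq)
  then show ?thesis using m0 unfolding x_def by (intro exI[of _ m]) simp
qed

context fs begin

lemma upper_cover:
  assumes W: "open_cover Y W"
  shows "cover_entropy Y T W \<le> topological_entropy X H"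
proof -
  obtain \<delta> where dpos: "\<delta> > 0" and box: "\<forall>p\<in>Fe. \<exists>G A. openin X G \<and> fst p \<in> G \<and> A \<in> W \<and>
           (\<forall>q\<in>Fe. fst q \<in> G \<and> dist (snd q) (snd p) < \<delta> \<longrightarrow> q \<in> A)"
    using box_lemma[OF W] by blast
  define K where "K = nat \<lfloor>2 / \<delta>\<rfloor>"
  have neY: "topspace Y \<noteq> {}"
  proof -
    obtain x where x: "x \<in> topspace X" using neX by blast
    then have "(x, phiL x) \<in> Fe" using mem_Fe phi_bounds by simp
    then show ?thesis using topY by blast
  qed
  show ?thesis
  proof (rule ereal_le_epsilon2)
    fix \<epsilon> :: real assume e: "\<epsilon> > 0"
    obtain m where m: "m > 0" "ln (real (m * K + 1)) / real m < \<epsilon> / 2"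
      using ln_lin_small[of "\<epsilon> / 2" K] e by auto
    define C where "C = m * K + 1"
    have C1: "C \<ge> 1" unfolding C_def by simp
    define Um where "Um = {V. openin X V \<and> (\<exists>S. finite S \<and> card S \<le> C \<and> (\<forall>A\<in>S. \<forall>i<m. A i \<in> W) \<and>
              (\<forall>y\<in>Fe. fst y \<in> V \<longrightarrow> (\<exists>A\<in>S. \<forall>i<m. (T ^^ i) y \<in> A i)))}"
    have Um: "open_cover X Um"
      unfolding open_cover_def
    proof (intro conjI ballI subsetI)
      fix V assume "V \<in> Um" then show "openin X V" unfolding Um_def by blast
    next
      fix x assume x: "x \<in> topspace X"
      from fiber_cover[OF W dpos box x, of m] obtain V S where
        "openin X V" "x \<in> V" "finite S" "card S \<le> C" "\<forall>A\<in>S. \<forall>i<m. A i \<in> W"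
        "\<forall>y\<in>Fe. fst y \<in> V \<longrightarrow> (\<exists>A\<in>S. \<forall>i<m. (T ^^ i) y \<in> A i)"
        unfolding C_def K_def by blast
      then have "V \<in> Um" unfolding Um_def by blast
      then show "x \<in> \<Union>Um" using \<open>x \<in> V\<close> by blast
    qed
    have SS: "\<forall>V\<in>Um. \<exists>S. finite S \<and> card S \<le> C \<and> (\<forall>A\<in>S. \<forall>i<m. A i \<in> W) \<and>
              (\<forall>y\<in>Fe. fst y \<in> V \<longrightarrow> (\<exists>A\<in>S. \<forall>i<m. (T ^^ i) y \<in> A i))"
      unfolding Um_def by blast
    define NY where "NY n = min_subcover_card Y (join_cover Y T W n)" for n
    define NX where "NX n = min_subcover_card X (join_cover X H Um n)" for n
    have cnt: "NY n \<le> NX n * C ^ (n div m + 1)" for n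
      unfolding NY_def NX_def by (rule count_lemma[OF W m(1) C1 Um SS])
    have NX1: "NX n \<ge> 1" for n unfolding NX_def
      by (rule min_sub_pos[OF compX join_open_cover[OF Um contH] neX])
    have NY1: "NY n \<ge> 1" for n unfolding NY_def
      by (rule min_sub_pos[OF compY join_open_cover[OF W contT] neY])
    define L where "L = ln (real C)"
    have L0: "L \<ge> 0" unfolding L_def using C1 by simp
    have Lm: "L / real m < \<epsilon> / 2" unfolding L_def C_def using m(2) by simp
    obtain N :: nat where N: "2 * L / \<epsilon> < real N" using reals_Archimedean2 by blast
    have ev: "ln (real (NY (Suc n))) / real (Suc n) \<le> ln (real (NX (Suc n))) / real (Suc n) + \<epsilon>" if "n \<ge> N" for n
    proof -
      define k where "k = Suc n"
      have k0: "real k > 0" unfolding k_def by simp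
      have "real (NY k) \<le> real (NX k) * real C ^ (k div m + 1)"
        using cnt[of k] by (metis of_nat_le_iff of_nat_mult of_nat_power)
      then have "ln (real (NY k)) \<le> ln (real (NX k) * real C ^ (k div m + 1))"
        using NY1[of k] NX1[of k] C1 by (subst ln_le_cancel_iff) auto
      also have "\<dots> = ln (real (NX k)) + real (k div m + 1) * L"
        using NX1[of k] C1 unfolding L_def by (simp add: ln_mult ln_realpow algebra_simps)
      finally have l1: "ln (real (NY k)) \<le> ln (real (NX k)) + real (k div m + 1) * L" .
      have "real (k div m) * real m \<le> real k"
        by (metis of_nat_le_iff of_nat_mult div_times_less_eq_dividend)
      then have "real (k div m) \<le> real k / real m" using m(1) by (simp add: le_divide_eq)
      then have "real (k div m + 1) * L \<le> (real k / real m + 1) * L" using L0 by (simp add: mult_right_mono)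
      also have "\<dots> = real k * (L / real m) + L" by (simp add: field_simps)
      also have "\<dots> \<le> real k * (\<epsilon> / 2) + real k * (\<epsilon> / 2)"
      proof -
        have "real k * (L / real m) \<le> real k * (\<epsilon> / 2)" by (rule mult_left_mono) (use Lm k0 in auto)
        moreover have "L \<le> real k * (\<epsilon> / 2)"
        proof -
          have "2 * L / \<epsilon> < real k" using N that unfolding k_def by simp
          then have "2 * L < real k * \<epsilon>" using e by (simp add: divide_less_eq)
          then show ?thesis by simp
        qed
        ultimately show ?thesis by linarith
      qed
      also have "\<dots> = real k * \<epsilon>" by simp
      finally have "ln (real (NY k)) \<le> ln (real (NX k)) + real k * \<epsilon>" using l1 by simp
      then have "ln (real (NY k)) / real k \<le> (ln (real (NX k)) + real k * \<epsilon>) / real k"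
        using k0 by (simp add: divide_right_mono)
      also have "\<dots> = ln (real (NX k)) / real k + \<epsilon>" using k0 by (simp add: add_divide_distrib)
      finally show ?thesis unfolding k_def .
    qed
    have "cover_entropy Y T W \<le> limsup (\<lambda>n. ereal (ln (real (NX (Suc n))) / real (Suc n)) + ereal \<epsilon>)"
      unfolding cover_entropy_def NY_def[symmetric]
    proof (rule Limsup_mono)
      show "\<forall>\<^sub>F n in sequentially. ereal (ln (real (NY (Suc n))) / real (Suc n))
              \<le> ereal (ln (real (NX (Suc n))) / real (Suc n)) + ereal \<epsilon>"
        using ev by (intro eventually_sequentiallyI[of N]) simp
    qed
    also have "\<dots> = cover_entropy X H Um + ereal \<epsilon>"
      unfolding cover_entropy_def NX_def by (rule Limsup_add_ereal_right) simp_all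
    also have "\<dots> \<le> topological_entropy X H + ereal \<epsilon>"
    proof -
      have "cover_entropy X H Um \<le> topological_entropy X H"
        unfolding topological_entropy_def by (rule SUP_upper) (use Um in simp)
      then show ?thesis by (simp add: add_right_mono)
    qed
    finally show "cover_entropy Y T W \<le> topological_entropy X H + ereal \<epsilon>" .
  qed
qed

lemma upper: "topological_entropy Y T \<le> topological_entropy X H"
  unfolding topological_entropy_def[of Y] by (rule SUP_least) (use upper_cover in auto)

end

theorem proposition3p2:
  fixes X :: "'a topology"
    and phiL phiU :: "'a \<Rightarrow> real"
    and H :: "'a \<Rightarrow> 'a"
    and T :: "'a \<times> real \<Rightarrow> 'a \<times> real"
  assumes "X homeomorphic_space cantor_space"
    and "is_fence_data X phiL phiU"
    and "continuous_map X X H"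
    and "H ` topspace X = topspace X"
    and "T \<in> fence X phiL phiU \<rightarrow> fence X phiL phiU"
    and "continuous_map (fence_topology X phiL phiU) (fence_topology X phiL phiU) T"
    and "is_lifting X phiL phiU H T"
    and "\<And>x. x \<in> topspace X \<Longrightarrow>
           embedding_map (subtopology (fence_topology X phiL phiU) ({x} \<times> fence_fiber X phiL phiU x))
                         (fence_topology X phiL phiU) T"
  shows "topological_entropy (fence_topology X phiL phiU) T = topological_entropy X H"
proof -
  note c = cantor_props[OF assms(1)]
  interpret fs X phiL phiU H T
    by (rule fs.intro[OF c assms(2-8)])
  show ?thesis by (rule antisym[OF upper lower])
qed

end
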